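(* Let $\nu>0$ be a real number. Define integers $s_1=4$ and $s_{k+1}=\lfloor 10^{\nu s_k}\rfloor s_k+1$ for $k\ge 1$. Then for every sequence $(a_n)_{n\ge1}$ with $a_n\in\{1,2\}$ for all $n$, the real number $\xi=\sum_{n=1}^{\infty}a_n10^{-s_n}$ is a $\nu$-Liouville number. In particular $\sum_{n=1}^\infty 10^{-s_n}\in\mathbb{L}^{(\nu)}$.
   Context: A real number $\xi$ is a Liouville number if there exist a sequence of rational numbers $p_k/q_k$ ($p_k,q_k$ integers, $q_k>1$) and a sequence of positive reals $(\omega_k)_k$ with $\omega_k\to\infty$ such that $0<|\xi-p_k/q_k|<q_k^{-\omega_k}$ for all $k$. For a real number $\xi$, let $S(\xi)$ be the set of real numbers $\nu^*\ge 0$ for which there exist a sequence of rationals $p_k/q_k$ (integers $q_k>1$) and a sequence of positive reals $(\omega_k)_k$ such that $0<|\xi-p_k/q_k|<q_k^{-\omega_k}$ for all $k$ and $\omega_k/q_k^{\nu^*}\to\infty$ as $k\to\infty$. For $\nu\in[0,\infty]$, $\xi$ is called a $\nu$-Liouville number if $\xi$ is a Liouville number and $\sup S(\xi)=\nu$; the set of $\nu$-Liouville numbers is denoted $\mathbb{L}^{(\nu)}$. In particular, $\xi$ is an $\infty$-Liouville number iff $S(\xi)=[0,\infty)$. *)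

theory Defs
  imports "HOL-Analysis.Analysis"
begin

definition approx_seq :: "real \<Rightarrow> (nat \<Rightarrow> int) \<Rightarrow> (nat \<Rightarrow> int) \<Rightarrow> (nat \<Rightarrow> real) \<Rightarrow> bool" where
  "approx_seq xi p q \<omega> \<longleftrightarrow>
     (\<forall>k. q k > 1 \<and> \<omega> k > 0 \<and>
          0 < \<bar>xi - real_of_int (p k) / real_of_int (q k)\<bar> \<and>
          \<bar>xi - real_of_int (p k) / real_of_int (q k)\<bar> < real_of_int (q k) powr (- \<omega> k))"

definition liouville :: "real \<Rightarrow> bool" where
  "liouville xi \<longleftrightarrow>
     (\<exists>p q \<omega>. approx_seq xi p q \<omega> \<and> filterlim \<omega> at_top sequentially)"

definition S_set :: "real \<Rightarrow> real set" where
  "S_set xi = {\<nu>s. \<nu>s \<ge> 0 \<and>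
     (\<exists>p q \<omega>. approx_seq xi p q \<omega> \<and>
        filterlim (\<lambda>k. \<omega> k / real_of_int (q k) powr \<nu>s) at_top sequentially)}"

definition nu_liouville :: "ereal \<Rightarrow> real \<Rightarrow> bool" where
  "nu_liouville \<nu> xi \<longleftrightarrow> liouville xi \<and> Sup (ereal ` S_set xi) = \<nu>"

text \<open>The sequence s, shifted to 0-based indexing: lsq nu n = s_(n+1).\<close>
primrec lsq :: "real \<Rightarrow> nat \<Rightarrow> int" where
  "lsq \<nu> 0 = 4"
| "lsq \<nu> (Suc k) = \<lfloor>10 powr (\<nu> * real_of_int (lsq \<nu> k))\<rfloor> * lsq \<nu> k + 1"

end

theory Submission imports Defs begin

locale LV = fixes nu :: real and a :: "nat \<Rightarrow> int"
  assumes nu_pos: "nu > 0" and a12: "\<And>n. a n \<in> {1,2}"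
begin

lemma lsq_ge: "lsq nu k \<ge> 4"
proof (induction k)
  case 0 then show ?case by simp
next
  case (Suc k)
  have "10 powr (nu * real_of_int (lsq nu k)) \<ge> 1" using Suc nu_pos by (intro ge_one_powr_ge_zero) auto
  then have "\<lfloor>10 powr (nu * real_of_int (lsq nu k))\<rfloor> \<ge> 1" by linarith
  then have "\<lfloor>10 powr (nu * real_of_int (lsq nu k))\<rfloor> * lsq nu k \<ge> 1 * 4"
    using Suc by (intro mult_mono) auto
  then show ?case by simp
qed

definition s :: "nat \<Rightarrow> nat" where "s k = nat (lsq nu k)"
definition fl :: "nat \<Rightarrow> nat" where "fl k = nat \<lfloor>10 powr (nu * real (s k))\<rfloor>"

lemma s_real: "real (s k) = real_of_int (lsq nu k)"
  using lsq_ge[of k] by (simp add: s_def)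

lemma s_ge4: "s k \<ge> 4" using lsq_ge[of k] by (simp add: s_def)

lemma fl_ge1: "fl k \<ge> 1"
proof -
  have "10 powr (nu * real (s k)) \<ge> 1" using nu_pos by (intro ge_one_powr_ge_zero) auto
  then show ?thesis unfolding fl_def by linarith
qed

lemma fl_le: "real (fl k) \<le> 10 powr (nu * real (s k))"
proof -
  have "10 powr (nu * real (s k)) \<ge> 1" using nu_pos by (intro ge_one_powr_ge_zero) auto
  then show ?thesis unfolding fl_def by linarith
qed

lemma fl_gt: "real (fl k) > 10 powr (nu * real (s k)) - 1"
proof -
  have "10 powr (nu * real (s k)) \<ge> 1" using nu_pos by (intro ge_one_powr_ge_zero) auto
  then show ?thesis unfolding fl_def by linarith
qed

lemma s_Suc: "s (Suc k) = fl k * s k + 1"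
proof -
  have "lsq nu (Suc k) = \<lfloor>10 powr (nu * real (s k))\<rfloor> * lsq nu k + 1"
    by (simp add: s_real)
  moreover have "\<lfloor>10 powr (nu * real (s k))\<rfloor> \<ge> 0" by simp
  ultimately show ?thesis unfolding s_def fl_def using lsq_ge[of k]
    by (simp add: nat_add_distrib nat_mult_distrib)
qed

lemma s_step: "s k + 1 \<le> s (Suc k)"
  using s_Suc[of k] fl_ge1[of k] by simp

lemma s_mono_add: "s m + j \<le> s (m + j)"
  by (induction j) (use s_step in \<open>auto intro: le_trans\<close>)

lemma s_ge: "k \<le> s k" using s_mono_add[of 0 k] by simp

lemma s_mono: "m \<le> n \<Longrightarrow> s m \<le> s n"
  using s_mono_add[of m "n - m"] by simp

definition t :: "nat \<Rightarrow> real" where "t n = real_of_int (a n) / 10 ^ s n"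

lemma t_pos: "t n > 0" using a12[of n] by (auto simp: t_def)
lemma t_le: "t n \<le> 2 / 10 ^ s n" using a12[of n] by (auto simp: t_def divide_right_mono)
lemma t_ge: "t n \<ge> 1 / 10 ^ s n" using a12[of n] by (auto simp: t_def divide_right_mono)

lemma summable_t: "summable t"
proof (rule summable_comparison_test)
  show "summable (\<lambda>n. 2 * (1/10::real) ^ n)" by (intro summable_mult summable_geometric) auto
  show "\<exists>N. \<forall>n\<ge>N. norm (t n) \<le> 2 * (1 / 10) ^ n"
  proof (intro exI allI impI)
    fix n :: nat
    have "(10::real) ^ n \<le> 10 ^ s n" using s_ge[of n] by (intro power_increasing) auto
    then have "2 / 10 ^ s n \<le> 2 / (10::real) ^ n" by (intro divide_left_mono) auto
    then show "norm (t n) \<le> 2 * (1 / 10) ^ n" using t_le[of n] t_pos[of n]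
      by (simp add: power_divide)
  qed
qed

definition xi where "xi = suminf t"
definition E where "E m = (\<Sum>i. t (i + Suc m))"

lemma E_eq: "E m = xi - (\<Sum>n\<le>m. t n)"
  using suminf_split_initial_segment[OF summable_t, of "Suc m"]
  unfolding E_def xi_def by (simp add: lessThan_Suc_atMost)

lemma summable_E: "summable (\<lambda>i. t (i + Suc m))"
  using summable_t summable_iff_shift[of t "Suc m"] by simp

lemma E_ge: "E m \<ge> 1 / 10 ^ s (Suc m)"
proof -
  have "(\<Sum>i\<in>{0}. t (i + Suc m)) \<le> E m" unfolding E_def
    by (rule sum_le_suminf[OF summable_E]) (auto intro: less_imp_le t_pos)
  then show ?thesis using t_ge[of "Suc m"] by simp
qed

lemma E_pos: "E m > 0" using E_ge[of m] by (smt (verit) divide_pos_pos zero_less_power)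

lemma E_le: "E m \<le> (20/9) / 10 ^ s (Suc m)"
proof -
  have "E m \<le> (\<Sum>i. (2 / 10 ^ s (Suc m)) * (1/10) ^ i)" unfolding E_def
  proof (rule suminf_le)
    show "summable (\<lambda>i. (2 / 10 ^ s (Suc m)) * (1/10::real) ^ i)"
      by (intro summable_mult summable_geometric) auto
    show "summable (\<lambda>i. t (i + Suc m))" by (rule summable_E)
    fix i
    have "s (Suc m) + i \<le> s (i + Suc m)" using s_mono_add[of "Suc m" i] by (simp add: add.commute)
    then have "(10::real) ^ (s (Suc m) + i) \<le> 10 ^ s (i + Suc m)" by (intro power_increasing) auto
    then have "2 / 10 ^ s (i + Suc m) \<le> 2 / (10::real) ^ (s (Suc m) + i)"
      by (intro divide_left_mono) auto
    also have "\<dots> = (2 / 10 ^ s (Suc m)) * (1/10) ^ i" by (simp add: power_add power_divide)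
    finally show "t (i + Suc m) \<le> (2 / 10 ^ s (Suc m)) * (1/10) ^ i" using t_le[of "i + Suc m"] by linarith
  qed
  also have "\<dots> = (2 / 10 ^ s (Suc m)) * (10/9)"
    by (subst suminf_mult) (auto simp: suminf_geometric)
  finally show ?thesis by simp
qed


definition P :: "nat \<Rightarrow> int" where "P m = (\<Sum>n\<le>m. a n * 10 ^ (s m - s n))"

lemma P_div: "real_of_int (P m) / 10 ^ s m = (\<Sum>n\<le>m. t n)"
proof -
  have "real_of_int (P m) / 10 ^ s m = (\<Sum>n\<le>m. real_of_int (a n) * 10 ^ (s m - s n) / 10 ^ s m)"
    unfolding P_def by (simp add: sum_divide_distrib)
  also have "\<dots> = (\<Sum>n\<le>m. t n)"
  proof (rule sum.cong)
    fix n assume "n \<in> {..m}"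
    then have "s n \<le> s m" by (intro s_mono) auto
    then have "(10::real) ^ s m = 10 ^ (s m - s n) * 10 ^ s n"
      by (simp flip: power_add)
    then show "real_of_int (a n) * 10 ^ (s m - s n) / 10 ^ s m = t n"
      by (simp add: t_def)
  qed simp
  finally show ?thesis .
qed

lemma xi_minus_P: "xi - real_of_int (P m) / 10 ^ s m = E m"
  using E_eq[of m] P_div[of m] by simp

definition K :: nat where "K = nat \<lceil>1/nu\<rceil>"

lemma fl_big: assumes "k \<ge> K" shows "fl k \<ge> 2"
proof -
  have "real K \<ge> 1/nu" unfolding K_def by linarith
  then have "real (s k) \<ge> 1/nu" using s_ge[of k] assms by (smt (verit) of_nat_mono)
  then have "nu * real (s k) \<ge> 1" using nu_pos by (simp add: field_simps)
  then have "10 powr (nu * real (s k)) \<ge> 10 powr 1" by (intro powr_mono) auto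
  then show ?thesis unfolding fl_def by simp linarith
qed

lemma s_double: assumes "k \<ge> K" shows "s (Suc k) \<ge> 2 * s k + 1"
proof -
  have "fl k * s k \<ge> 2 * s k" using fl_big[OF assms] by simp
  then show ?thesis using s_Suc[of k] by simp
qed

lemma P_mod: assumes "m \<ge> Suc K" shows "\<exists>R. P m = a m + 100 * R"
proof -
  obtain m' where m: "m = Suc m'" "m' \<ge> K" using assms by (cases m) auto
  have "s m \<ge> s m' + 2" using s_double[OF m(2)] s_ge4[of m'] m by simp
  have "\<forall>n<m. (100::int) dvd a n * 10 ^ (s m - s n)"
  proof (intro allI impI)
    fix n assume "n < m"
    then have "s n \<le> s m'" using m by (intro s_mono) auto
    then have "s m - s n = 2 + (s m - s n - 2)" using \<open>s m \<ge> s m' + 2\<close> by simp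
    then have "(10::int) ^ (s m - s n) = 10 ^ 2 * 10 ^ (s m - s n - 2)"
      by (metis power_add)
    then have "(10::int) ^ (s m - s n) = 100 * 10 ^ (s m - s n - 2)" by simp
    then show "(100::int) dvd a n * 10 ^ (s m - s n)" by simp
  qed
  then have "(100::int) dvd (\<Sum>n<m. a n * 10 ^ (s m - s n))" by (intro dvd_sum) auto
  then obtain R where R: "(\<Sum>n<m. a n * 10 ^ (s m - s n)) = 100 * R" by (elim dvdE)
  have "P m = a m + (\<Sum>n<m. a n * 10 ^ (s m - s n))"
    unfolding P_def by (simp add: lessThan_Suc_atMost[symmetric] m(1))
  then show ?thesis using R by auto
qed

lemma P_decomp: assumes "m \<ge> Suc K" shows "\<exists>u e. P m = 2 ^ e * u \<and> e \<le> 1 \<and> coprime u 10"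
proof -
  obtain R where R: "P m = a m + 100 * R" using P_mod[OF assms] by blast
  show ?thesis
  proof (cases "a m = 1")
    case True
    have "gcd (10::int) ((10*R)*10 + 1) = 1" using gcd_add_mult[of 10 "10*R" 1] by simp
    then have "coprime (10 * (10 * R) + 1) (10::int)"
      unfolding coprime_iff_gcd_eq_1 by (simp add: gcd.commute[of _ 10] mult.commute)
    then show ?thesis using R True by (intro exI[of _ "P m"] exI[of _ 0]) (simp add: algebra_simps)
  next
    case False
    then have "a m = 2" using a12[of m] by auto
    have "gcd (10::int) ((5*R)*10 + 1) = 1" using gcd_add_mult[of 10 "5*R" 1] by simp
    then have "coprime (10 * (5 * R) + 1) (10::int)"
      unfolding coprime_iff_gcd_eq_1 by (simp add: gcd.commute[of _ 10] mult.commute)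
    then show ?thesis using R \<open>a m = 2\<close>
      by (intro exI[of _ "10 * (5 * R) + 1"] exI[of _ 1]) (simp add: algebra_simps)
  qed
qed

lemma P_neq: assumes "m \<ge> Suc K" "q > 0" "2 * q < 10 ^ s m"
  shows "p * 10 ^ s m \<noteq> q * P m"
proof
  assume eq: "p * 10 ^ s m = q * P m"
  obtain u e where ue: "P m = 2 ^ e * u" "e \<le> 1" "coprime u 10" using P_decomp[OF assms(1)] by blast
  have "(10::int) ^ s m dvd (q * 2 ^ e) * u" using eq ue(1) by (metis dvd_triv_right mult.assoc)
  moreover have "coprime u ((10::int) ^ s m)" using ue(3) by simp
  ultimately have "(10::int) ^ s m dvd q * 2 ^ e"
    by (metis coprime_commute coprime_dvd_mult_left_iff)
  moreover have "q * 2 ^ e dvd 2 * q" using ue(2)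
    by (cases e) auto
  ultimately have "(10::int) ^ s m dvd 2 * q" by (rule dvd_trans)
  then have "(10::int) ^ s m \<le> 2 * q" using assms(2) by (intro zdvd_imp_le) auto
  then show False using assms(3) by simp
qed


lemma sep:
  fixes p q :: int and \<omega> :: real
  assumes m: "m \<ge> Suc K" and q2: "q \<ge> 2" and qm: "2 * q < 10 ^ s m"
    and ap: "\<bar>xi - real_of_int p / real_of_int q\<bar> < real_of_int q powr (- \<omega>)"
  shows "\<omega> * ln (real_of_int q) < ln 2 + ln (real_of_int q) + real (s m) * ln 10"
proof -
  define Q :: real where "Q = 10 ^ s m"
  define r where "r = real_of_int q"
  have Qpos: "Q > 0" and rpos: "r \<ge> 2" using q2 by (auto simp: Q_def r_def)
  have "real_of_int (2 * q) < real_of_int (10 ^ s m)" using qm by (simp only: of_int_less_iff)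
  then have qmr: "2 * r < Q" unfolding Q_def r_def by simp
  have neq: "p * 10 ^ s m \<noteq> q * P m" using P_neq[OF m, of q p] q2 qm by simp
  then have "\<bar>p * 10 ^ s m - q * P m\<bar> \<ge> 1" by linarith
  then have "real_of_int \<bar>p * 10 ^ s m - q * P m\<bar> \<ge> 1" by linarith
  moreover have "real_of_int \<bar>p * 10 ^ s m - q * P m\<bar> = \<bar>real_of_int p * Q - r * real_of_int (P m)\<bar>"
    by (simp add: Q_def r_def)
  ultimately have ge1: "\<bar>real_of_int p * Q - r * real_of_int (P m)\<bar> \<ge> 1" by simp
  have "real_of_int p / r - real_of_int (P m) / Q = (real_of_int p * Q - r * real_of_int (P m)) / (r * Q)"
    using Qpos rpos by (simp add: field_simps)
  then have d1: "\<bar>real_of_int p / r - real_of_int (P m) / Q\<bar> \<ge> 1 / (r * Q)"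
    using ge1 Qpos rpos by (simp add: abs_divide abs_mult divide_right_mono)
  have "s (Suc m) \<ge> 2 * s m + 1" using s_double[of m] m by simp
  then have "(10::real) ^ s (Suc m) \<ge> 10 ^ (2 * s m + 1)" by (intro power_increasing) auto
  moreover have "(10::real) ^ (2 * s m + 1) = 10 * Q * Q"
  proof -
    have "2 * s m + 1 = Suc (s m + s m)" by simp
    then show ?thesis unfolding Q_def by (simp only: power_Suc power_add mult.assoc)
  qed
  ultimately have QS: "(10::real) ^ s (Suc m) \<ge> 10 * Q * Q" by simp
  have "E m \<le> (20/9) / 10 ^ s (Suc m)" by (rule E_le)
  also have "\<dots> \<le> (20/9) / (10 * Q * Q)" using QS Qpos by (intro divide_left_mono) auto
  also have "\<dots> < 1 / (2 * r * Q)"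
  proof -
    have "2 * r * Q < Q * Q" using qmr Qpos by simp
    then have h: "4 * (Q * r) < 2 * (Q * Q)" by (simp add: mult_ac)
    have "Q * Q > 0" using Qpos by simp
    then have "4 * (Q * r) < 9 * (Q * Q)" using h by linarith
    then have "(20/9) * (2 * r * Q) < 1 * (10 * Q * Q)" by (simp add: mult_ac)
    then show ?thesis using Qpos rpos by (simp add: field_simps)
  qed
  finally have Eb: "E m < 1 / (2 * r * Q)" .
  have "xi - real_of_int (P m) / Q = E m" using xi_minus_P[of m] by (simp add: Q_def)
  then have "\<bar>xi - real_of_int p / r\<bar> \<ge> 1 / (r * Q) - 1 / (2 * r * Q)"
  proof -
    have key: "\<And>x A B e d h::real. x - B = e \<Longrightarrow> d \<le> \<bar>A - B\<bar> \<Longrightarrow> e < h \<Longrightarrow> 0 < e \<Longrightarrow> d - h \<le> \<bar>x - A\<bar>"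
      by (smt (verit))
    show ?thesis by (rule key[OF \<open>xi - real_of_int (P m) / Q = E m\<close> d1 Eb E_pos])
  qed
  also have "1 / (r * Q) - 1 / (2 * r * Q) = 1 / (2 * r * Q)" using Qpos rpos by (simp add: field_simps)
  finally have "1 / (2 * r * Q) < r powr (- \<omega>)" using ap unfolding r_def by linarith
  then have A: "1 / (2 * r * Q) * r powr \<omega> < r powr (- \<omega>) * r powr \<omega>"
    by (rule mult_strict_right_mono) (use rpos in simp)
  have "r powr (- \<omega>) * r powr \<omega> = r powr (- \<omega> + \<omega>)" by (rule powr_add[symmetric])
  also have "\<dots> = 1" using rpos by simp
  finally have "r powr \<omega> / (2 * r * Q) < 1" using A by simp
  then have "r powr \<omega> < 2 * r * Q" using rpos Qpos by (simp add: pos_divide_less_eq)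
  then have "ln (r powr \<omega>) < ln (2 * r * Q)" using rpos Qpos by (intro ln_less_cancel_iff[THEN iffD2]) auto
  moreover have "ln (r powr \<omega>) = \<omega> * ln r" using rpos by (simp add: ln_powr)
  moreover have "ln (2 * r * Q) = ln 2 + ln r + real (s m) * ln 10" using rpos Qpos
    by (simp add: ln_mult Q_def ln_realpow)
  ultimately show ?thesis by (simp add: r_def)
qed


lemma int_lt_pow10: "int n < (10::int) ^ n"
proof (induction n)
  case (Suc n)
  have "(10::int) ^ n > 0" by simp
  then show ?case using Suc by (simp only: power_Suc of_nat_Suc)
qed simp

lemma bound: "\<exists>C\<ge>0. \<forall>p q \<omega>. q \<ge> 2 \<longrightarrow> \<omega> > 0 \<longrightarrow>
   \<bar>xi - real_of_int p / real_of_int q\<bar> < real_of_int q powr (- \<omega>) \<longrightarrow>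
   \<omega> \<le> C * real_of_int q powr nu"
proof -
  define C1 where "C1 = 2 + real (s (Suc K)) * ln 10 / ln 2"
  define C2 where "C2 = 3 + 2 * 2 powr nu"
  define C where "C = max C1 C2"
  have C1pos: "C1 \<ge> 0" unfolding C1_def by simp
  have C0: "C \<ge> 0" unfolding C_def using C1pos by simp
  have "\<forall>p q \<omega>. q \<ge> 2 \<longrightarrow> \<omega> > 0 \<longrightarrow>
   \<bar>xi - real_of_int p / real_of_int q\<bar> < real_of_int q powr (- \<omega>) \<longrightarrow>
   \<omega> \<le> C * real_of_int q powr nu"
  proof (intro allI impI)
    fix p q :: int and \<omega> :: real
    assume q2: "q \<ge> 2" and \<omega>pos: "\<omega> > 0"
      and ap: "\<bar>xi - real_of_int p / real_of_int q\<bar> < real_of_int q powr (- \<omega>)"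
    define r where "r = real_of_int q"
    define L where "L = ln r"
    have r2: "r \<ge> 2" using q2 unfolding r_def by simp
    have L2: "L \<ge> ln 2" unfolding L_def using r2 by simp
    have Lpos: "L > 0" using L2 ln_gt_zero[of 2] by linarith
    have rnu: "r powr nu \<ge> 1" using r2 nu_pos by (intro ge_one_powr_ge_zero) auto
    define Pm where "Pm = (\<lambda>m. m \<ge> Suc K \<and> 2 * q < 10 ^ s m)"
    define m0 where "m0 = Suc K + nat (2 * q)"
    have "2 * q \<le> int m0" unfolding m0_def by simp
    also have "int m0 \<le> int (s m0)" using s_ge[of m0] by simp
    also have "\<dots> < 10 ^ s m0" by (rule int_lt_pow10)
    finally have "Pm m0" unfolding Pm_def m0_def by simp
    define m where "m = (LEAST m. Pm m)"
    have Pm_m: "Pm m" unfolding m_def by (rule LeastI[of Pm m0]) fact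
    have minm: "\<And>j. j < m \<Longrightarrow> \<not> Pm j" unfolding m_def by (rule not_less_Least)
    have mK: "m \<ge> Suc K" and qm: "2 * q < 10 ^ s m" using Pm_m unfolding Pm_def by auto
    have ineq: "\<omega> * L < ln 2 + L + real (s m) * ln 10"
      using sep[OF mK q2 qm ap] unfolding L_def r_def .
    define X where "X = real (s m) * ln 10 / L"
    have "\<omega> < (ln 2 + L + real (s m) * ln 10) / L" using ineq Lpos by (simp add: field_simps)
    also have "\<dots> = ln 2 / L + 1 + X" unfolding X_def using Lpos by (simp add: field_simps)
    also have "ln 2 / L \<le> 1" using L2 by (subst pos_divide_le_eq[OF Lpos]) simp
    finally have \<omega>X: "\<omega> < 2 + X" by simp
    show "\<omega> \<le> C * real_of_int q powr nu"
    proof (cases "m = Suc K")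
      case True
      have "X \<le> real (s (Suc K)) * ln 10 / ln 2" unfolding X_def True
        using L2 Lpos ln_gt_zero[of "2::real"] by (intro divide_left_mono) auto
      then have "\<omega> \<le> C1" using \<omega>X unfolding C1_def by simp
      also have "C1 \<le> C" unfolding C_def by simp
      also have "C \<le> C * r powr nu" using C0 rnu by (simp add: mult_le_cancel_left1)
      finally show ?thesis by (simp add: r_def)
    next
      case False
      then obtain m' where m': "m = Suc m'" "m' \<ge> Suc K" using mK by (cases m) auto
      have "\<not> Pm m'" using minm m' by simp
      then have "10 ^ s m' \<le> 2 * q" using m' unfolding Pm_def by simp
      then have "real_of_int (10 ^ s m') \<le> real_of_int (2 * q)" by (simp only: of_int_le_iff)
      then have Qr: "(10::real) ^ s m' \<le> 2 * r" unfolding r_def by simp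
      define s' where "s' = real (s m')"
      define f where "f = real (fl m')"
      have s'4: "s' \<ge> 4" unfolding s'_def using s_ge4[of m'] by simp
      have f0: "f \<ge> 0" unfolding f_def by simp
      have sm: "real (s m) = f * s' + 1" unfolding f_def s'_def m' s_Suc by simp
      have "ln ((10::real) ^ s m') \<le> ln (2 * r)" using Qr r2 by (intro ln_mono) auto
      then have "s' * ln 10 \<le> ln 2 + L" unfolding s'_def L_def using r2 by (simp add: ln_realpow ln_mult)
      moreover have "ln 2 \<le> ln (10::real)" by simp
      moreover have "ln (10::real) > 0" by simp
      moreover have s4l: "s' * ln 10 \<ge> 4 * ln 10" using s'4 by (intro mult_right_mono) auto
      ultimately have Lb: "L \<ge> s' * ln 10 / 2" by linarith
      have "(2 * f + 1) * L \<ge> (2 * f + 1) * (s' * ln 10 / 2)"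
        using Lb f0 by (intro mult_left_mono) auto
      moreover have "(2 * f + 1) * (s' * ln 10 / 2) = f * s' * ln 10 + s' * ln 10 / 2" by (simp add: algebra_simps)
      moreover have "s' * ln 10 / 2 \<ge> ln 10" using s4l \<open>ln (10::real) > 0\<close> by linarith
      moreover have "(f * s' + 1) * ln 10 = f * s' * ln 10 + ln 10" by (simp add: algebra_simps)
      ultimately have "(2 * f + 1) * L \<ge> (f * s' + 1) * ln 10" by linarith
      then have XB: "X \<le> 2 * f + 1" unfolding X_def sm using Lpos by (simp add: field_simps)
      have "f \<le> 10 powr (nu * s')" unfolding f_def s'_def by (rule fl_le)
      also have "10 powr (nu * s') = ((10::real) ^ s m') powr nu"
        unfolding s'_def by (simp add: powr_powr powr_realpow[symmetric] mult.commute)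
      also have "\<dots> \<le> (2 * r) powr nu" using Qr nu_pos by (intro powr_mono2) auto
      also have "\<dots> = 2 powr nu * r powr nu" using r2 by (simp add: powr_mult)
      finally have fb: "f \<le> 2 powr nu * r powr nu" .
      have "\<omega> < 3 + 2 * (2 powr nu * r powr nu)" using \<omega>X XB fb by linarith
      also have "\<dots> \<le> C2 * r powr nu" unfolding C2_def using rnu by (simp add: algebra_simps)
      also have "\<dots> \<le> C * r powr nu" unfolding C_def using rnu by (intro mult_right_mono) auto
      finally show ?thesis by (simp add: r_def)
    qed
  qed
  then show ?thesis using C0 by blast
qed


lemma lower: assumes ns0: "0 \<le> ns" and nsnu: "ns < nu" shows "ns \<in> S_set xi"
proof -
  define p where "p = P"
  define q :: "nat \<Rightarrow> int" where "q = (\<lambda>k. 10 ^ s k)"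
  define \<omega> where "\<omega> = (\<lambda>k. real (fl k))"
  have qr: "real_of_int (q k) = (10::real) ^ s k" for k unfolding q_def by simp
  have "approx_seq xi p q \<omega>"
    unfolding approx_seq_def
  proof (intro allI conjI)
    fix k
    show "q k > 1" unfolding q_def using s_ge4[of k] by (intro one_less_power) auto
    show "\<omega> k > 0" unfolding \<omega>_def using fl_ge1[of k] by simp
    have eq: "xi - real_of_int (p k) / real_of_int (q k) = E k"
      unfolding p_def qr by (rule xi_minus_P)
    show "0 < \<bar>xi - real_of_int (p k) / real_of_int (q k)\<bar>" using eq E_pos[of k] by simp
    have "real_of_int (q k) powr (- \<omega> k) = ((10::real) powr real (s k)) powr (- real (fl k))"
      unfolding qr \<omega>_def by (simp add: powr_realpow)
    also have "\<dots> = inverse (10 powr (real (fl k * s k)))"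
      by (simp add: powr_powr powr_minus mult.commute)
    also have "\<dots> = inverse ((10::real) ^ (fl k * s k))" by (subst powr_realpow) auto
    finally have qw: "real_of_int (q k) powr (- \<omega> k) = inverse ((10::real) ^ (fl k * s k))" .
    have "(10::real) ^ s (Suc k) = 10 * 10 ^ (fl k * s k)" unfolding s_Suc by simp
    then have "E k \<le> (20/9) / (10 * 10 ^ (fl k * s k))" using E_le[of k] by simp
    also have "\<dots> < inverse ((10::real) ^ (fl k * s k))" by (simp add: field_simps)
    finally show "\<bar>xi - real_of_int (p k) / real_of_int (q k)\<bar> < real_of_int (q k) powr (- \<omega> k)"
      using eq E_pos[of k] qw by simp
  qed
  moreover have "filterlim (\<lambda>k. \<omega> k / real_of_int (q k) powr ns) at_top sequentially"
  proof -
    define c where "c = nu - ns"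
    have c0: "c > 0" unfolding c_def using nsnu by simp
    have F: "filterlim (\<lambda>k. c * ln 10 * real k) at_top sequentially"
      by (rule filterlim_tendsto_pos_mult_at_top[OF tendsto_const _ filterlim_real_sequentially])
        (use c0 in simp)
    have G: "c * ln 10 * real k \<le> \<omega> k / real_of_int (q k) powr ns" for k
    proof -
      define x where "x = real (s k)"
      have xk: "real k \<le> x" unfolding x_def using s_ge[of k] by simp
      have x0: "x \<ge> 0" unfolding x_def by simp
      have "c * ln 10 * real k \<le> c * ln 10 * x" using xk c0 by (intro mult_left_mono) auto
      also have "\<dots> \<le> 10 powr (c * x) - 1"
        using exp_ge_add_one_self[of "c * (x * ln 10)"] by (simp add: powr_def mult_ac del: exp_ge_add_one_self)
      also have "10 powr (c * x) - 1 = (10 powr (nu * x) - 10 powr (ns * x)) / 10 powr (ns * x)"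
      proof -
        have "nu * x = c * x + ns * x" unfolding c_def by (simp add: algebra_simps)
        then have e1: "10 powr (nu * x) = 10 powr (c * x) * 10 powr (ns * x)" by (simp only: powr_add)
        have B: "(10::real) powr (ns * x) > 0" by simp
        have "(10 powr (c * x) * 10 powr (ns * x) - 10 powr (ns * x)) / 10 powr (ns * x)
              = 10 powr (c * x) - (1::real)"
          using B by (simp add: diff_divide_distrib)
        then show ?thesis unfolding e1 by simp
      qed
      also have "\<dots> \<le> (10 powr (nu * x) - 1) / 10 powr (ns * x)"
        using ns0 x0 by (intro divide_right_mono) (auto intro: ge_one_powr_ge_zero)
      also have "\<dots> \<le> \<omega> k / 10 powr (ns * x)"
        using fl_gt[of k] unfolding \<omega>_def x_def by (intro divide_right_mono) auto
      also have "10 powr (ns * x) = real_of_int (q k) powr ns"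
      proof -
        have "(10::real) powr x = 10 ^ s k" unfolding x_def by (rule powr_realpow) simp
        moreover have "(10::real) powr (ns * x) = (10 powr x) powr ns" by (simp add: powr_powr mult.commute)
        ultimately show ?thesis unfolding qr by simp
      qed
      finally show ?thesis .
    qed
    show ?thesis
      by (rule filterlim_at_top_mono[OF F]) (intro always_eventually allI G)
  qed
  ultimately show ?thesis unfolding S_set_def using ns0 by blast
qed

lemma upper: assumes "ns \<in> S_set xi" shows "ns \<le> nu"
proof (rule ccontr)
  assume "\<not> ns \<le> nu"
  then have gt: "ns > nu" by simp
  obtain p q \<omega> where ap: "approx_seq xi p q \<omega>"
    and lim: "filterlim (\<lambda>k. \<omega> k / real_of_int (q k) powr ns) at_top sequentially"
    using assms unfolding S_set_def by blast
  obtain C where C0: "C \<ge> 0" and C: "\<And>p q \<omega>. q \<ge> 2 \<Longrightarrow> \<omega> > 0 \<Longrightarrow>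
     \<bar>xi - real_of_int p / real_of_int q\<bar> < real_of_int q powr (- \<omega>) \<Longrightarrow>
     \<omega> \<le> C * real_of_int q powr nu" using bound by blast
  have "eventually (\<lambda>k. C < \<omega> k / real_of_int (q k) powr ns) sequentially"
    using lim by (simp add: filterlim_at_top_dense)
  then obtain N where N: "\<forall>n\<ge>N. C < \<omega> n / real_of_int (q n) powr ns"
    unfolding eventually_sequentially by blast
  define k where "k = N"
  have k: "C < \<omega> k / real_of_int (q k) powr ns" using N unfolding k_def by simp
  have q1: "q k > 1" and w0: "\<omega> k > 0"
    and a: "\<bar>xi - real_of_int (p k) / real_of_int (q k)\<bar> < real_of_int (q k) powr (- \<omega> k)"
    using ap unfolding approx_seq_def by blast+
  have q2: "q k \<ge> 2" using q1 by linarith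
  define r where "r = real_of_int (q k)"
  have r2: "r \<ge> 2" using q2 unfolding r_def by simp
  have "\<omega> k \<le> C * r powr nu" using C[OF q2 w0 a] unfolding r_def .
  then have "\<omega> k / r powr ns \<le> C * r powr nu / r powr ns" by (intro divide_right_mono) auto
  also have "\<dots> = C * r powr (nu - ns)" using r2 by (simp add: powr_diff)
  also have "r powr (nu - ns) \<le> 1" using r2 gt powr_mono[of "nu - ns" 0 r] by simp
  then have "C * r powr (nu - ns) \<le> C" using C0 by (simp add: mult_left_le)
  finally show False using k unfolding r_def by simp
qed

lemma nuL: "nu_liouville (ereal nu) xi"
  unfolding nu_liouville_def
proof
  have "0 \<in> S_set xi" using lower[of 0] nu_pos by simp
  then obtain p q \<omega> where ap: "approx_seq xi p q \<omega>"
    and lim: "filterlim (\<lambda>k. \<omega> k / real_of_int (q k) powr 0) at_top sequentially"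
    unfolding S_set_def by blast
  have "\<And>k. q k > 1" using ap unfolding approx_seq_def by blast
  then have "\<And>k. real_of_int (q k) \<noteq> 0" by (metis of_int_eq_0_iff not_one_less_zero)
  then have "(\<lambda>k. \<omega> k / real_of_int (q k) powr 0) = \<omega>" by (simp add: fun_eq_iff)
  then show "liouville xi" unfolding liouville_def using ap lim by auto
next
  show "Sup (ereal ` S_set xi) = ereal nu"
  proof (rule antisym)
    show "Sup (ereal ` S_set xi) \<le> ereal nu" by (rule Sup_least) (auto dest: upper)
    show "ereal nu \<le> Sup (ereal ` S_set xi)"
      unfolding le_Sup_iff
    proof (intro allI impI)
      fix y assume y: "y < ereal nu"
      show "\<exists>a\<in>ereal ` S_set xi. y < a"
      proof (cases "y < 0")
        case True
        have "0 \<in> S_set xi" using lower[of 0] nu_pos by simp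
        then show ?thesis using True by (intro bexI[of _ "ereal 0"]) (auto simp: zero_ereal_def)
      next
        case False
        then obtain r where r: "y = ereal r" "r \<ge> 0" "r < nu" using y
          by (cases y) (auto simp: zero_ereal_def)
        have "(r + nu) / 2 \<in> S_set xi" using r by (intro lower) auto
        then show ?thesis using r by (intro bexI[of _ "ereal ((r + nu) / 2)"]) auto
      qed
    qed
  qed
qed

lemma xi_eq: "(\<Sum>n. real_of_int (a n) * 10 powr (- real_of_int (lsq nu n))) = xi"
proof -
  have "(\<lambda>n. real_of_int (a n) * 10 powr (- real_of_int (lsq nu n))) = t"
    by (auto simp: fun_eq_iff t_def s_real[symmetric] powr_minus powr_realpow divide_inverse)
  then show ?thesis unfolding xi_def by simp
qed

end

theorem mainTheorem1:
  fixes \<nu> :: real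
  assumes "\<nu> > 0"
  shows "(\<forall>a :: nat \<Rightarrow> int. (\<forall>n. a n \<in> {1, 2}) \<longrightarrow>
            nu_liouville (ereal \<nu>)
              (\<Sum>n. real_of_int (a n) * 10 powr (- real_of_int (lsq \<nu> n))))
         \<and> nu_liouville (ereal \<nu>) (\<Sum>n. 10 powr (- real_of_int (lsq \<nu> n)))"
proof
  show "\<forall>a :: nat \<Rightarrow> int. (\<forall>n. a n \<in> {1, 2}) \<longrightarrow>
            nu_liouville (ereal \<nu>)
              (\<Sum>n. real_of_int (a n) * 10 powr (- real_of_int (lsq \<nu> n)))"
  proof (intro allI impI)
    fix a :: "nat \<Rightarrow> int" assume "\<forall>n. a n \<in> {1, 2}"
    then interpret LV \<nu> a using assms by unfold_locales auto
    show "nu_liouville (ereal \<nu>) (\<Sum>n. real_of_int (a n) * 10 powr (- real_of_int (lsq \<nu> n)))"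
      using nuL xi_eq by simp
  qed
  interpret L1: LV \<nu> "\<lambda>_. 1" using assms by unfold_locales auto
  show "nu_liouville (ereal \<nu>) (\<Sum>n. 10 powr (- real_of_int (lsq \<nu> n)))"
    using L1.nuL L1.xi_eq by simp
qed

end
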